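(* Let $p\ge 1$ and $c>0$ be constants and let $a>0$. Let $x_a$ denote the unique (maximal) solution of the initial value problem $$x'''+c\,x^p\, x''=0,\qquad x(0)=0=x'(0),\quad x''(0)=a.$$ Then $x_a$ is defined for all $t\ge 0$. *)

theory Defs
  imports Complex_Main
begin

definition ivp_solution :: "real \<Rightarrow> real \<Rightarrow> real \<Rightarrow> real set \<Rightarrow> (real \<Rightarrow> real) \<Rightarrow> bool" where
  "ivp_solution p c a I x \<longleftrightarrow>
     (\<exists>x1 x2. x 0 = 0 \<and> x1 0 = 0 \<and> x2 0 = a \<and>
       (\<forall>t\<in>I. (x has_real_derivative x1 t) (at t within I) \<and>
               (x1 has_real_derivative x2 t) (at t within I) \<and>
               (x2 has_real_derivative (- c * (x t powr p) * x2 t)) (at t within I)))"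

end

theory Submission
  imports Defs "HOL-Analysis.Analysis"
begin
lemma powr_abs_eq: "(z::real) powr p = \<bar>z\<bar> powr p"
  by (cases "z \<ge> 0") (auto simp: uminus_powr_eq[of z p, symmetric])

lemma at_within_Icc_Ici:
  fixes t b :: real assumes "0 \<le> t" "t < b"
  shows "at t within {0..b} = at t within {0..}"
  by (rule at_within_nhd[where S="{..<b}"]) (use assms in auto)

lemma powr_lip_nonneg:
  fixes u v B p :: real
  assumes "1 \<le> p" "0 \<le> v" "v \<le> u" "u \<le> B"
  shows "u powr p - v powr p \<le> p * B powr (p-1) * (u - v)"
proof (cases "v = 0")
  case True
  show ?thesis
  proof (cases "u = 0")
    case True with \<open>v=0\<close> show ?thesis by simp
  next
    case False
    hence u: "u > 0" using assms by simp
    have "u powr p = u * u powr (p-1)" using u by (simp add: powr_mult_base)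
    also have "\<dots> \<le> u * B powr (p-1)"
      using assms u by (intro mult_left_mono powr_mono2) auto
    also have "\<dots> \<le> p * B powr (p-1) * u"
      using assms u by (simp add: mult_right_mono)
    finally show ?thesis using True by simp
  qed
next
  case False
  hence v: "v > 0" using assms by simp
  show ?thesis
  proof (cases "v = u")
    case True then show ?thesis by simp
  next
    case False
    hence "v < u" using assms by simp
    have d: "\<And>z. v \<le> z \<Longrightarrow> z \<le> u \<Longrightarrow> ((\<lambda>z. z powr p) has_real_derivative (p * z powr (p-1))) (at z)"
      using v by (auto intro!: has_real_derivative_powr)
    obtain z where z: "v < z" "z < u" "u powr p - v powr p = (u - v) * (p * z powr (p-1))"
      using MVT2[OF \<open>v < u\<close> d] by blast
    have "z powr (p-1) \<le> B powr (p-1)" using z assms v by (intro powr_mono2) auto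
    hence "(u - v) * (p * z powr (p-1)) \<le> (u - v) * (p * B powr (p-1))"
      using z assms by (intro mult_left_mono) auto
    thus ?thesis using z by (simp add: algebra_simps)
  qed
qed

lemma powr_lip:
  fixes u v B p :: real
  assumes "1 \<le> p" "\<bar>u\<bar> \<le> B" "\<bar>v\<bar> \<le> B"
  shows "\<bar>u powr p - v powr p\<bar> \<le> p * B powr (p-1) * \<bar>u - v\<bar>"
proof -
  have k: "0 \<le> p * B powr (p-1)" using assms by simp
  have h: "\<And>u v. 0 \<le> v \<Longrightarrow> 0 \<le> u \<Longrightarrow> u \<le> B \<Longrightarrow> v \<le> B \<Longrightarrow> \<bar>u powr p - v powr p\<bar> \<le> p * B powr (p-1) * \<bar>u - v\<bar>"
  proof -
    fix u v :: real assume *: "0 \<le> v" "0 \<le> u" "u \<le> B" "v \<le> B"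
    show "\<bar>u powr p - v powr p\<bar> \<le> p * B powr (p-1) * \<bar>u - v\<bar>"
    proof (cases "v \<le> u")
      case True
      have "v powr p \<le> u powr p" using True * by (intro powr_mono2) (use assms in auto)
      with powr_lip_nonneg[of p v u B] assms * True show ?thesis by simp
    next
      case False
      have "u powr p \<le> v powr p" using False * by (intro powr_mono2) (use assms in auto)
      with powr_lip_nonneg[of p u v B] assms * False show ?thesis by simp
    qed
  qed
  have "\<bar>u powr p - v powr p\<bar> = \<bar>\<bar>u\<bar> powr p - \<bar>v\<bar> powr p\<bar>" by (simp add: powr_abs_eq[of u] powr_abs_eq[of v])
  also have "\<dots> \<le> p * B powr (p-1) * \<bar>\<bar>u\<bar> - \<bar>v\<bar>\<bar>" using h assms by simp
  also have "\<dots> \<le> p * B powr (p-1) * \<bar>u - v\<bar>" using k by (intro mult_left_mono) auto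
  finally show ?thesis .
qed

lemma exp_lip: "0 \<le> (u::real) \<Longrightarrow> 0 \<le> v \<Longrightarrow> \<bar>exp (-u) - exp (-v)\<bar> \<le> \<bar>u - v\<bar>"
proof -
  have h: "exp (-u) - exp (-v) \<le> v - u" if "0 \<le> u" "u \<le> v" for u v :: real
  proof -
    have e: "1 - exp (-(v-u)) \<le> v - u" using exp_ge_add_one_self[of "u-v"] by (simp del: exp_ge_add_one_self)
    have "exp (-u) - exp (-v) = exp (-u) * (1 - exp (-(v-u)))" by (simp add: algebra_simps exp_diff[symmetric] exp_minus_inverse) (simp add: exp_add[symmetric])
    also have "\<dots> \<le> 1 * (v - u)"
      using that e by (intro mult_mono) auto
    finally show ?thesis by simp
  qed
  assume "0 \<le> u" "0 \<le> v"
  thus ?thesis using h[of u v] h[of v u] by (cases "u \<le> v") auto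
qed

lemma int_diff_bound:
  fixes f g :: "real \<Rightarrow> real"
  assumes "continuous_on {0..s} f" "continuous_on {0..s} g" "0 \<le> s" "\<And>r. r\<in>{0..s} \<Longrightarrow> \<bar>f r - g r\<bar> \<le> M"
  shows "\<bar>integral {0..s} f - integral {0..s} g\<bar> \<le> s * M"
proof -
  have i: "f integrable_on {0..s}" "g integrable_on {0..s}"
    using assms integrable_continuous_interval by blast+
  have "\<bar>integral {0..s} f - integral {0..s} g\<bar> = norm (integral {0..s} (\<lambda>r. f r - g r))"
    using integral_diff[OF i] by simp
  also have "\<dots> \<le> integral {0..s} (\<lambda>r. M)"
    using i assms(4) by (intro integral_norm_bound_integral) (auto intro!: integrable_diff)
  also have "\<dots> = s * M" using assms(3) by simp
  finally show ?thesis .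
qed

lemma int_bound:
  fixes f :: "real \<Rightarrow> real"
  assumes "continuous_on {0..s} f" "0 \<le> s" "\<And>r. r\<in>{0..s} \<Longrightarrow> f r \<le> M"
  shows "integral {0..s} f \<le> s * M"
proof -
  have "integral {0..s} f \<le> integral {0..s} (\<lambda>r. M)"
    using assms integrable_continuous_interval by (intro integral_le) auto
  also have "\<dots> = s * M" using assms(2) by simp
  finally show ?thesis .
qed

lemma int_nonneg:
  fixes f :: "real \<Rightarrow> real"
  assumes "\<And>r. r\<in>{0..s} \<Longrightarrow> 0 \<le> f r"
  shows "0 \<le> integral {0..s} f"
  using assms integral_nonneg not_integrable_integral by (metis order.refl)

lemma poly_integral:
  fixes M K r :: real assumes "0 \<le> r"
  shows "integral {0..r} (\<lambda>s. M * (K * s)^n / fact n) = M * K^n * r^(Suc n) / fact (Suc n)"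
proof -
  define C where "C = M * K^n / fact (Suc n)"
  have "((\<lambda>s. M * (K * s)^n / fact n) has_integral (C * r^(Suc n) - C * 0^(Suc n))) {0..r}"
  proof (rule fundamental_theorem_of_calculus[OF assms])
    fix x :: real assume "x \<in> {0..r}"
    have "((\<lambda>s. C * s^(Suc n)) has_real_derivative C * (real (Suc n) * x^n)) (at x within {0..r})"
      using DERIV_cmult[OF DERIV_pow[of "Suc n" x "{0..r}"], of C] by simp
    moreover have "C * (real (Suc n) * x^n) = M * (K * x)^n / fact n"
      unfolding C_def by (simp add: power_mult_distrib field_simps del: of_nat_Suc)
    ultimately show "((\<lambda>s. C * s^(Suc n)) has_vector_derivative M * (K * x)^n / fact n) (at x within {0..r})"
      by (simp add: has_real_derivative_iff_has_vector_derivative)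
  qed
  hence "integral {0..r} (\<lambda>s. M * (K * s)^n / fact n) = C * r^(Suc n)" by (metis integral_unique diff_zero mult_zero_right power_0_Suc)
  thus ?thesis by (simp add: C_def)
qed

lemma iter_bound:
  fixes d :: "nat \<Rightarrow> real \<Rightarrow> real"
  assumes cont: "\<And>n. continuous_on {0..b} (d n)"
    and step: "\<And>n r. r \<in> {0..b} \<Longrightarrow> \<bar>d (Suc n) r\<bar> \<le> K * integral {0..r} (\<lambda>s. \<bar>d n s\<bar>)"
    and base: "\<And>r. r \<in> {0..b} \<Longrightarrow> \<bar>d 0 r\<bar> \<le> M" and K: "0 \<le> K"
  shows "r \<in> {0..b} \<Longrightarrow> \<bar>d n r\<bar> \<le> M * (K * r)^n / fact n"
proof (induction n arbitrary: r)
  case 0 thus ?case using base by simp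
next
  case (Suc n)
  have sub: "{0..r} \<subseteq> {0..b}" using Suc.prems by auto
  have "integral {0..r} (\<lambda>s. \<bar>d n s\<bar>) \<le> integral {0..r} (\<lambda>s. M * (K * s)^n / fact n)"
  proof (rule integral_le)
    show "(\<lambda>s. \<bar>d n s\<bar>) integrable_on {0..r}"
      using continuous_on_subset[OF cont sub] by (intro integrable_continuous_interval continuous_intros)
    show "(\<lambda>s. M * (K * s)^n / fact n) integrable_on {0..r}"
      by (intro integrable_continuous_interval continuous_intros) auto
    show "\<And>x. x \<in> {0..r} \<Longrightarrow> \<bar>d n x\<bar> \<le> M * (K * x) ^ n / fact n"
      using Suc.IH sub by auto
  qed
  also have "\<dots> = M * K^n * r^(Suc n) / fact (Suc n)" using Suc.prems by (intro poly_integral) auto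
  finally have "K * integral {0..r} (\<lambda>s. \<bar>d n s\<bar>) \<le> K * (M * K^n * r^(Suc n) / fact (Suc n))"
    using K by (intro mult_left_mono)
  also have "\<dots> = M * (K * r)^(Suc n) / fact (Suc n)" by (simp add: power_mult_distrib)
  finally show ?case using step[OF Suc.prems, of n] by linarith
qed

context
  fixes p c a :: real
  assumes p: "1 \<le> p" and c: "0 < c" and a: "0 < a"
begin

definition II :: "(real \<Rightarrow> real) \<Rightarrow> real \<Rightarrow> real" where "II z t = integral {0..t} (\<lambda>r. z r powr p)"
definition UU :: "(real \<Rightarrow> real) \<Rightarrow> real \<Rightarrow> real" where "UU z t = a * exp (- c * II z t)"
definition VV :: "(real \<Rightarrow> real) \<Rightarrow> real \<Rightarrow> real" where "VV z t = integral {0..t} (UU z)"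
definition FF :: "(real \<Rightarrow> real) \<Rightarrow> real \<Rightarrow> real" where "FF z t = integral {0..t} (VV z)"

lemma II_nonneg: "0 \<le> II z t"
  unfolding II_def using int_nonneg[of t "\<lambda>r. z r powr p"] by simp

lemma UU_pos: "0 < UU z t" using a by (simp add: UU_def)

lemma UU_le: "UU z t \<le> a"
proof -
  have "exp (- c * II z t) \<le> 1" using c II_nonneg[of z t] by (simp add: mult_nonneg_nonneg)
  thus ?thesis using a by (simp add: UU_def)
qed

context
  fixes z :: "real \<Rightarrow> real" and b :: real
  assumes zc: "continuous_on {0..b} z"
begin

lemma pow_cont: "continuous_on {0..b} (\<lambda>r. z r powr p)"
proof -
  have "continuous_on {0..b} (\<lambda>r. \<bar>z r\<bar> powr p)"
    using p by (intro continuous_on_powr' continuous_intros zc) auto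
  thus ?thesis by (simp add: powr_abs_eq[of "z _"])
qed

lemma II_deriv: "t \<in> {0..b} \<Longrightarrow> (II z has_real_derivative z t powr p) (at t within {0..b})"
  unfolding II_def[abs_def] by (rule integral_has_real_derivative[OF pow_cont])

lemma UU_deriv: "t \<in> {0..b} \<Longrightarrow> (UU z has_real_derivative (- c * z t powr p * UU z t)) (at t within {0..b})"
  unfolding UU_def[abs_def]
  by (rule derivative_eq_intros II_deriv refl | assumption | simp add: UU_def)+

lemma UU_cont: "continuous_on {0..b} (UU z)"
  using UU_deriv by (rule DERIV_continuous_on)

lemma VV_deriv: "t \<in> {0..b} \<Longrightarrow> (VV z has_real_derivative UU z t) (at t within {0..b})"
  unfolding VV_def[abs_def] by (rule integral_has_real_derivative[OF UU_cont])

lemma VV_cont: "continuous_on {0..b} (VV z)"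
  using VV_deriv by (rule DERIV_continuous_on)

lemma FF_deriv: "t \<in> {0..b} \<Longrightarrow> (FF z has_real_derivative VV z t) (at t within {0..b})"
  unfolding FF_def[abs_def] by (rule integral_has_real_derivative[OF VV_cont])

lemma FF_cont: "continuous_on {0..b} (FF z)"
  using FF_deriv by (rule DERIV_continuous_on)

lemma VV_bounds: "t \<in> {0..b} \<Longrightarrow> 0 \<le> VV z t \<and> VV z t \<le> t * a"
proof -
  assume t: "t \<in> {0..b}"
  have cc: "continuous_on {0..t} (UU z)" using continuous_on_subset[OF UU_cont, of "{0..t}"] t by auto
  show ?thesis unfolding VV_def
    using int_bound[OF cc _ UU_le] int_nonneg[of t "UU z"] UU_pos[of z] t by (auto simp: less_imp_le)
qed

lemma FF_bounds: "t \<in> {0..b} \<Longrightarrow> 0 \<le> FF z t \<and> FF z t \<le> t * (t * a)"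
proof -
  assume t: "t \<in> {0..b}"
  have cc: "continuous_on {0..t} (VV z)" using continuous_on_subset[OF VV_cont, of "{0..t}"] t by auto
  have "\<And>r. r \<in> {0..t} \<Longrightarrow> VV z r \<le> t * a"
    using VV_bounds t a by (meson atLeastAtMost_iff mult_right_mono less_imp_le order.trans)
  then show ?thesis unfolding FF_def
    using int_bound[OF cc] int_nonneg[of t "VV z"] VV_bounds t by auto
qed

end


lemma FF_lip:
  fixes z w :: "real \<Rightarrow> real"
  assumes zc: "continuous_on {0..b} z" and wc: "continuous_on {0..b} w"
    and bd: "\<And>r. r\<in>{0..b} \<Longrightarrow> \<bar>z r\<bar> \<le> B \<and> \<bar>w r\<bar> \<le> B" and t: "t \<in> {0..b}"
  shows "\<bar>FF z t - FF w t\<bar> \<le> (b*b*a*c*(p*B powr (p-1))) * integral {0..t} (\<lambda>r. \<bar>z r - w r\<bar>)"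
proof -
  define L where "L = p*B powr (p-1)"
  define J where "J = integral {0..t} (\<lambda>r. \<bar>z r - w r\<bar>)"
  have L0: "0 \<le> L" using p by (simp add: L_def)
  have sub: "\<And>s. s \<in> {0..t} \<Longrightarrow> {0..s} \<subseteq> {0..b}" using t by auto
  have dc: "continuous_on {0..b} (\<lambda>r. \<bar>z r - w r\<bar>)" using zc wc by (intro continuous_intros)
  have J0: "0 \<le> J" unfolding J_def by (rule int_nonneg) simp
  have IIb: "\<bar>II z s - II w s\<bar> \<le> L * J" if s: "s \<in> {0..t}" for s
  proof -
    have "\<bar>II z s - II w s\<bar> \<le> integral {0..s} (\<lambda>r. L * \<bar>z r - w r\<bar>)"
    proof -
      have i: "(\<lambda>r. z r powr p) integrable_on {0..s}" "(\<lambda>r. w r powr p) integrable_on {0..s}"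
        using continuous_on_subset[OF pow_cont[OF zc] sub[OF s]] continuous_on_subset[OF pow_cont[OF wc] sub[OF s]]
        integrable_continuous_interval by blast+
      have i2: "(\<lambda>r. L * \<bar>z r - w r\<bar>) integrable_on {0..s}"
        using continuous_on_subset[OF dc sub[OF s]]
        by (intro integrable_continuous_interval continuous_on_mult_left)
      have "\<bar>II z s - II w s\<bar> = norm (integral {0..s} (\<lambda>r. z r powr p - w r powr p))"
        unfolding II_def using integral_diff[OF i] by simp
      also have "\<dots> \<le> integral {0..s} (\<lambda>r. L * \<bar>z r - w r\<bar>)"
        using i i2 powr_lip[OF p] bd sub[OF s] unfolding L_def
        by (intro integral_norm_bound_integral) (auto intro!: integrable_diff)
      finally show ?thesis .
    qed
    also have "\<dots> = L * integral {0..s} (\<lambda>r. \<bar>z r - w r\<bar>)" by simp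
    also have "\<dots> \<le> L * J" unfolding J_def
      using L0 s continuous_on_subset[OF dc sub[OF s]] continuous_on_subset[OF dc, of "{0..t}"] t
      by (intro mult_left_mono integral_subset_le integrable_continuous_interval) auto
    finally show ?thesis .
  qed
  have UUb: "\<bar>UU z s - UU w s\<bar> \<le> a * c * (L * J)" if s: "s \<in> {0..t}" for s
  proof -
    have "\<bar>UU z s - UU w s\<bar> = a * \<bar>exp (- (c * II z s)) - exp (- (c * II w s))\<bar>"
      unfolding UU_def using a by (simp add: abs_mult right_diff_distrib[symmetric])
    also have "\<dots> \<le> a * \<bar>c * II z s - c * II w s\<bar>"
      using a c II_nonneg by (intro mult_left_mono exp_lip) auto
    also have "\<dots> = a * c * \<bar>II z s - II w s\<bar>" using c by (simp add: abs_mult right_diff_distrib[symmetric])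
    also have "\<dots> \<le> a * c * (L * J)" using a c IIb[OF s] by (intro mult_left_mono) auto
    finally show ?thesis .
  qed
  have VVb: "\<bar>VV z s - VV w s\<bar> \<le> b * (a * c * (L * J))" if s: "s \<in> {0..t}" for s
  proof -
    have "\<bar>VV z s - VV w s\<bar> \<le> s * (a * c * (L * J))" unfolding VV_def
      using s UUb continuous_on_subset[OF UU_cont[OF zc] sub[OF s]] continuous_on_subset[OF UU_cont[OF wc] sub[OF s]] t
      by (intro int_diff_bound) auto
    also have "\<dots> \<le> b * (a * c * (L * J))" using s t a c L0 J0 by (intro mult_right_mono) auto
    finally show ?thesis .
  qed
  have "\<bar>FF z t - FF w t\<bar> \<le> t * (b * (a * c * (L * J)))" unfolding FF_def
    using VVb continuous_on_subset[OF VV_cont[OF zc], of "{0..t}"] continuous_on_subset[OF VV_cont[OF wc], of "{0..t}"] t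
    by (intro int_diff_bound) auto
  also have "\<dots> \<le> b * (b * (a * c * (L * J)))" using t a c L0 J0 by (intro mult_right_mono) auto
  finally show ?thesis by (simp add: L_def J_def algebra_simps)
qed


lemma fact_lim: "(\<lambda>n. M * (x::real)^n / fact n) \<longlonglongrightarrow> 0"
proof -
  have "(\<lambda>n. inverse (fact n) * x^n) \<longlonglongrightarrow> 0" by (rule summable_LIMSEQ_zero[OF summable_exp])
  hence "(\<lambda>n. M * (inverse (fact n) * x^n)) \<longlonglongrightarrow> M * 0" by (intro tendsto_intros)
  thus ?thesis by (simp add: field_simps)
qed

lemma FF_unique:
  fixes z w :: "real \<Rightarrow> real"
  assumes zc: "continuous_on {0..b} z" and wc: "continuous_on {0..b} w"
    and zf: "\<And>r. r\<in>{0..b} \<Longrightarrow> z r = FF z r" and wf: "\<And>r. r\<in>{0..b} \<Longrightarrow> w r = FF w r"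
    and t: "t \<in> {0..b}"
  shows "z t = w t"
proof -
  define B where "B = b * (b * a) + 1"
  have bd: "\<bar>z r\<bar> \<le> B \<and> \<bar>w r\<bar> \<le> B" if r: "r \<in> {0..b}" for r
  proof -
    have "r * (r * a) \<le> b * (b * a)" using r a by (intro mult_mono) (auto intro!: mult_mono)
    thus ?thesis using FF_bounds[OF zc r] FF_bounds[OF wc r] zf[OF r] wf[OF r] unfolding B_def by auto
  qed
  define K where "K = b*b*a*c*(p*B powr (p-1))"
  have K0: "0 \<le> K" unfolding K_def using a c p t by simp
  have "\<bar>z t - w t\<bar> \<le> (2*B) * (K * t)^n / fact n" for n
  proof (rule iter_bound[where d="\<lambda>_ r. z r - w r", OF _ _ _ K0 t])
    show "continuous_on {0..b} (\<lambda>r. z r - w r)" for n :: nat using zc wc by (intro continuous_intros)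
    show "\<bar>z r - w r\<bar> \<le> 2 * B" if "r \<in> {0..b}" for r using bd[OF that] by linarith
    show "\<bar>z r - w r\<bar> \<le> K * integral {0..r} (\<lambda>s. \<bar>z s - w s\<bar>)" if r: "r \<in> {0..b}" for r and n :: nat
      using FF_lip[OF zc wc bd r] zf[OF r] wf[OF r] unfolding K_def by simp
  qed
  moreover have "(\<lambda>n. (2*B) * (K * t)^n / fact n) \<longlonglongrightarrow> 0" by (rule fact_lim)
  ultimately have "\<bar>z t - w t\<bar> \<le> 0"
    using LIMSEQ_le_const by blast
  thus ?thesis by simp
qed

primrec seqx :: "nat \<Rightarrow> real \<Rightarrow> real" where
  "seqx 0 = (\<lambda>_. 0)" | "seqx (Suc n) = FF (seqx n)"

lemma seqx_cont: "continuous_on {0..b} (seqx n)"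
  by (induction n) (auto intro: FF_cont)

lemma seqx_bounds: "t \<in> {0..b} \<Longrightarrow> 0 \<le> seqx n t \<and> seqx n t \<le> b * (b * a)"
proof (cases n)
  case 0 thus "t \<in> {0..b} \<Longrightarrow> ?thesis" using a by auto
next
  case (Suc m)
  assume t: "t \<in> {0..b}"
  have "t * (t * a) \<le> b * (b * a)" using t a by (intro mult_mono) (auto intro!: mult_mono)
  thus ?thesis using FF_bounds[OF seqx_cont t, of m] Suc by auto
qed

definition XX :: "real \<Rightarrow> real" where "XX t = suminf (\<lambda>k. seqx (Suc k) t - seqx k t)"

lemma seqx_lim: assumes t: "0 \<le> t" shows "(\<lambda>n. seqx n t) \<longlonglongrightarrow> XX t"
proof -
  define b where "b = t"
  define B where "B = b * (b * a) + 1"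
  define K where "K = b*b*a*c*(p*B powr (p-1))"
  have tb: "t \<in> {0..b}" using t by (simp add: b_def)
  have K0: "0 \<le> K" unfolding K_def using a c p t by (simp add: b_def)
  have bd: "\<And>n r. r \<in> {0..b} \<Longrightarrow> \<bar>seqx n r\<bar> \<le> B" proof -
    fix n r assume "r \<in> {0..b}"
    from seqx_bounds[OF this, of n] show "\<bar>seqx n r\<bar> \<le> B" unfolding B_def by linarith
  qed
  have est: "\<bar>seqx (Suc n) t - seqx n t\<bar> \<le> B * (K * t)^n / fact n" for n
  proof (rule iter_bound[where d="\<lambda>n r. seqx (Suc n) r - seqx n r", OF _ _ _ K0 tb])
    show "continuous_on {0..b} (\<lambda>r. seqx (Suc n) r - seqx n r)" for n
      by (intro continuous_intros seqx_cont)
    show "\<bar>seqx (Suc 0) r - seqx 0 r\<bar> \<le> B" if "r \<in> {0..b}" for r using bd[OF that, of 1] by simp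
    show "\<bar>seqx (Suc (Suc n)) r - seqx (Suc n) r\<bar> \<le> K * integral {0..r} (\<lambda>s. \<bar>seqx (Suc n) s - seqx n s\<bar>)"
      if r: "r \<in> {0..b}" for r n
    proof -
      have h: "\<And>r'. r'\<in>{0..b} \<Longrightarrow> \<bar>seqx (Suc n) r'\<bar> \<le> B \<and> \<bar>seqx n r'\<bar> \<le> B" using bd by blast
      from FF_lip[OF seqx_cont seqx_cont h r] show ?thesis unfolding K_def by simp
    qed
  qed
  have "summable (\<lambda>n. B * (inverse (fact n) * (K * t)^n))" by (intro summable_mult summable_exp)
  hence "summable (\<lambda>n. seqx (Suc n) t - seqx n t)"
    using est by (intro summable_comparison_test[of "\<lambda>n. seqx (Suc n) t - seqx n t" "\<lambda>n. B * (inverse (fact n) * (K * t)^n)"]) (auto simp: field_simps)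
  from summable_LIMSEQ[OF this] have "(\<lambda>n. \<Sum>i<n. seqx (Suc i) t - seqx i t) \<longlonglongrightarrow> XX t"
    unfolding XX_def .
  moreover have "(\<lambda>n. \<Sum>i<n. seqx (Suc i) t - seqx i t) = (\<lambda>n. seqx n t)"
    by (rule ext, subst sum_lessThan_telescope[of "\<lambda>i. seqx i t"]) simp
  ultimately show ?thesis by simp
qed


lemma XX_bounds: assumes t: "t \<in> {0..b}" shows "0 \<le> XX t \<and> XX t \<le> b * (b * a)"
proof -
  have l: "(\<lambda>n. seqx n t) \<longlonglongrightarrow> XX t" using t by (intro seqx_lim) auto
  have "0 \<le> XX t" using seqx_bounds[OF t] by (intro LIMSEQ_le_const[OF l]) auto
  moreover have "XX t \<le> b * (b * a)" using seqx_bounds[OF t] by (intro LIMSEQ_le_const2[OF l]) auto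
  ultimately show ?thesis by simp
qed

lemma UU_lim: assumes s: "0 \<le> s" shows "(\<lambda>k. UU (seqx k) s) \<longlonglongrightarrow> UU XX s"
proof -
  have "(\<lambda>k. integral {0..s} (\<lambda>r. seqx k r powr p)) \<longlonglongrightarrow> integral {0..s} (\<lambda>r. XX r powr p)"
  proof (rule dominated_convergence(2)[where h="\<lambda>_. (s*(s*a)) powr p"])
    show "(\<lambda>r. seqx k r powr p) integrable_on {0..s}" for k
      by (intro integrable_continuous_interval pow_cont seqx_cont)
    show "(\<lambda>_. (s*(s*a)) powr p) integrable_on {0..s}" by (rule integrable_const_ivl)
    show "norm (seqx k r powr p) \<le> (s*(s*a)) powr p" if r: "r \<in> {0..s}" for k r
      using seqx_bounds[OF r, of k] p by (auto intro!: powr_mono2)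
    show "(\<lambda>k. seqx k r powr p) \<longlonglongrightarrow> XX r powr p" if r: "r \<in> {0..s}" for r
    proof (rule tendsto_powr')
      show "(\<lambda>k. seqx k r) \<longlonglongrightarrow> XX r" using r by (intro seqx_lim) auto
      show "XX r \<noteq> 0 \<or> 0 < p \<and> (\<forall>\<^sub>F k in sequentially. 0 \<le> seqx k r)"
        using p seqx_bounds[OF r] by auto
    qed simp
  qed
  thus ?thesis unfolding UU_def II_def by (intro tendsto_intros)
qed

lemma VV_lim: assumes t: "0 \<le> t"
  shows "UU XX integrable_on {0..t}" "(\<lambda>k. VV (seqx k) t) \<longlonglongrightarrow> VV XX t"
proof -
  have dc: "UU XX integrable_on {0..t} \<and> (\<lambda>k. integral {0..t} (UU (seqx k))) \<longlonglongrightarrow> integral {0..t} (UU XX)"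
    if f: "\<And>k. UU (seqx k) integrable_on {0..t}" and h: "(\<lambda>_. a) integrable_on {0..t}"
    and le: "\<And>k r. r \<in> {0..t} \<Longrightarrow> norm (UU (seqx k) r) \<le> (\<lambda>_. a) r"
    and conv: "\<And>r. r \<in> {0..t} \<Longrightarrow> (\<lambda>k. UU (seqx k) r) \<longlonglongrightarrow> UU XX r"
    using dominated_convergence[OF f h le conv] by blast
  have "UU XX integrable_on {0..t} \<and> (\<lambda>k. integral {0..t} (UU (seqx k))) \<longlonglongrightarrow> integral {0..t} (UU XX)"
  proof (rule dc)
    show "UU (seqx k) integrable_on {0..t}" for k
      by (intro integrable_continuous_interval UU_cont seqx_cont)
    show "(\<lambda>_. a) integrable_on {0..t}" by (rule integrable_const_ivl)
    show "norm (UU (seqx k) r) \<le> a" for k r using UU_le UU_pos[of "seqx k" r] by (simp add: less_imp_le)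
    show "(\<lambda>k. UU (seqx k) r) \<longlonglongrightarrow> UU XX r" if r: "r \<in> {0..t}" for r
      using r by (intro UU_lim) auto
  qed
  thus "UU XX integrable_on {0..t}" "(\<lambda>k. VV (seqx k) t) \<longlonglongrightarrow> VV XX t" unfolding VV_def by auto
qed

lemma FF_lim: assumes t: "0 \<le> t"
  shows "VV XX integrable_on {0..t}" "(\<lambda>k. FF (seqx k) t) \<longlonglongrightarrow> FF XX t"
proof -
  have dc: "VV XX integrable_on {0..t} \<and> (\<lambda>k. integral {0..t} (VV (seqx k))) \<longlonglongrightarrow> integral {0..t} (VV XX)"
    if f: "\<And>k. VV (seqx k) integrable_on {0..t}" and h: "(\<lambda>_. t * a) integrable_on {0..t}"
    and le: "\<And>k r. r \<in> {0..t} \<Longrightarrow> norm (VV (seqx k) r) \<le> (\<lambda>_. t * a) r"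
    and conv: "\<And>r. r \<in> {0..t} \<Longrightarrow> (\<lambda>k. VV (seqx k) r) \<longlonglongrightarrow> VV XX r"
    using dominated_convergence[OF f h le conv] by blast
  have "VV XX integrable_on {0..t} \<and> (\<lambda>k. integral {0..t} (VV (seqx k))) \<longlonglongrightarrow> integral {0..t} (VV XX)"
  proof (rule dc)
    show "VV (seqx k) integrable_on {0..t}" for k
      by (intro integrable_continuous_interval VV_cont seqx_cont)
    show "(\<lambda>_. t * a) integrable_on {0..t}" by (rule integrable_const_ivl)
    show "norm (VV (seqx k) r) \<le> t * a" if r: "r \<in> {0..t}" for k r
    proof -
      have "r * a \<le> t * a" using r a by (intro mult_right_mono) auto
      thus ?thesis using VV_bounds[OF seqx_cont r, of k] by auto
    qed
    show "(\<lambda>k. VV (seqx k) r) \<longlonglongrightarrow> VV XX r" if r: "r \<in> {0..t}" for r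
      using r by (intro VV_lim) auto
  qed
  thus "VV XX integrable_on {0..t}" "(\<lambda>k. FF (seqx k) t) \<longlonglongrightarrow> FF XX t" unfolding FF_def by auto
qed

lemma XX_fix: assumes t: "0 \<le> t" shows "XX t = FF XX t"
proof -
  have "(\<lambda>k. seqx (Suc k) t) \<longlonglongrightarrow> XX t" using seqx_lim[OF t] by (rule LIMSEQ_Suc)
  hence "(\<lambda>k. FF (seqx k) t) \<longlonglongrightarrow> XX t" by simp
  from LIMSEQ_unique[OF this FF_lim(2)[OF t]] show ?thesis .
qed

lemma XX_cont: "continuous_on {0..b} XX"
proof (cases "0 \<le> b")
  case True
  have "continuous_on {0..b} (FF XX)" unfolding FF_def[abs_def]
    by (rule indefinite_integral_continuous_1[OF FF_lim(1)[OF True]])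
  thus ?thesis by (rule continuous_on_cong[THEN iffD1, rotated 2]) (auto simp: XX_fix)
qed simp


lemma exists_sol: "ivp_solution p c a {0..} XX"
  unfolding ivp_solution_def
proof (rule exI[of _ "VV XX"], rule exI[of _ "UU XX"], intro conjI ballI)
  show "XX 0 = 0" using XX_fix[of 0] by (simp add: FF_def)
  show "VV XX 0 = 0" by (simp add: VV_def)
  show "UU XX 0 = a" by (simp add: UU_def II_def)
  fix t :: real assume "t \<in> {0..}"
  hence t0: "0 \<le> t" by simp
  define b where "b = t + 1"
  have tb: "t \<in> {0..b}" using t0 by (simp add: b_def)
  have at: "at t within {0..b} = at t within {0..}" using t0 by (intro at_within_Icc_Ici) (auto simp: b_def)
  have "(FF XX has_real_derivative VV XX t) (at t within {0..b})" by (rule FF_deriv[OF XX_cont tb])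
  hence "(XX has_real_derivative VV XX t) (at t within {0..b})"
    by (rule has_field_derivative_transform_within[of _ _ _ _ 1]) (use tb XX_fix in auto)
  thus "(XX has_real_derivative VV XX t) (at t within {0..})" by (simp add: at)
  show "(VV XX has_real_derivative UU XX t) (at t within {0..})" using VV_deriv[OF XX_cont tb] by (simp add: at)
  show "(UU XX has_real_derivative (- c * (XX t powr p) * UU XX t)) (at t within {0..})"
    using UU_deriv[OF XX_cont tb] by (simp add: at)
qed

lemma sol_eq:
  assumes sol: "ivp_solution p c a {0..<T} y" and t: "t \<in> {0..<T}"
  shows "y t = XX t"
proof -
  obtain y1 y2 where y0: "y 0 = 0" "y1 0 = 0" "y2 0 = a" and
    d: "\<And>r. r \<in> {0..<T} \<Longrightarrow> (y has_real_derivative y1 r) (at r within {0..<T}) \<and>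
               (y1 has_real_derivative y2 r) (at r within {0..<T}) \<and>
               (y2 has_real_derivative (- c * (y r powr p) * y2 r)) (at r within {0..<T})"
    using sol unfolding ivp_solution_def by blast
  define S where "S = {0..t}"
  have SS: "S \<subseteq> {0..<T}" using t by (auto simp: S_def)
  have dS: "(y has_real_derivative y1 r) (at r within S')" "(y1 has_real_derivative y2 r) (at r within S')"
    "(y2 has_real_derivative (- c * (y r powr p) * y2 r)) (at r within S')"
    if "r \<in> S'" "S' \<subseteq> S" for r S'
  proof -
    have rT: "r \<in> {0..<T}" and sub: "S' \<subseteq> {0..<T}" using that SS by auto
    show "(y has_real_derivative y1 r) (at r within S')" "(y1 has_real_derivative y2 r) (at r within S')"
      "(y2 has_real_derivative (- c * (y r powr p) * y2 r)) (at r within S')"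
      using d[OF rT] by (auto intro: DERIV_subset[OF _ sub])
  qed
  have yc: "continuous_on S y"
    by (rule DERIV_continuous_on[OF dS(1)[OF _ order.refl]])
  have ycS: "continuous_on {0..t} y" using yc by (simp add: S_def)
  have hd: "((\<lambda>r. y2 r * exp (c * II y r)) has_real_derivative 0) (at r within S)" if r: "r \<in> S" for r
  proof -
    have "((\<lambda>r. y2 r * exp (c * II y r)) has_real_derivative
        (- c * (y r powr p) * y2 r) * exp (c * II y r) + y2 r * (exp (c * II y r) * (c * y r powr p))) (at r within S)"
      using r dS(3)[OF r order.refl] II_deriv[OF ycS, of r] unfolding S_def
      by (auto intro!: derivative_eq_intros)
    thus ?thesis by (simp add: algebra_simps)
  qed
  obtain C where C: "\<And>r. r \<in> S \<Longrightarrow> y2 r * exp (c * II y r) = C"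
    using has_field_derivative_zero_constant[of S, OF _ hd] by (auto simp: S_def)
  have "0 \<in> S" using t by (simp add: S_def)
  from C[OF this] y0 have Ca: "C = a" by (simp add: II_def)
  have y2U: "y2 r = UU y r" if "r \<in> S" for r
    using C[OF that] Ca by (simp add: UU_def exp_minus field_simps)
  have ftc: "f r = integral {0..r} f'" if r: "r \<in> S" and f0: "f 0 = 0"
    and fd: "\<And>x S'. x \<in> S' \<Longrightarrow> S' \<subseteq> S \<Longrightarrow> (f has_real_derivative f' x) (at x within S')" for f f' r
  proof -
    have "(f' has_integral (f r - f 0)) {0..r}"
      using r fd[of _ "{0..r}"]
      by (intro fundamental_theorem_of_calculus) (auto simp: S_def has_real_derivative_iff_has_vector_derivative[symmetric])
    thus ?thesis using f0 by (simp add: integral_unique)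
  qed
  have y1V: "y1 r = VV y r" if r: "r \<in> S" for r
  proof -
    have "y1 r = integral {0..r} y2" by (rule ftc[OF r y0(2) dS(2)])
    also have "\<dots> = integral {0..r} (UU y)" using r by (intro integral_cong y2U) (auto simp: S_def)
    finally show ?thesis by (simp add: VV_def)
  qed
  have yF: "y r = FF y r" if r: "r \<in> {0..t}" for r
  proof -
    have rS: "r \<in> S" using r by (simp add: S_def)
    have "y r = integral {0..r} y1" by (rule ftc[OF rS y0(1) dS(1)])
    also have "\<dots> = integral {0..r} (VV y)" using r by (intro integral_cong y1V) (auto simp: S_def)
    finally show ?thesis by (simp add: FF_def)
  qed
  show ?thesis using t by (intro FF_unique[OF ycS XX_cont yF XX_fix]) auto
qed

end

theorem lemma1:
  fixes p c a :: real
  assumes "p \<ge> 1" and "c > 0" and "a > 0"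
  shows "\<exists>x. ivp_solution p c a {0..} x \<and>
           (\<forall>T y. T > 0 \<longrightarrow> ivp_solution p c a {0..<T} y \<longrightarrow> (\<forall>t\<in>{0..<T}. y t = x t))"
  using exists_sol[OF assms] sol_eq[OF assms] by blast

end
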